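(* Let $h\geq2$ and let $V\leq S_h$ be $2$-representable, i.e. $V=S(f)$ for some Boolean function $f:\{0,1\}^h\to\{0,1\}$. Then for every $n\geq2$, in $G=S_h\times S_n$ one has $O(V\times\{id\})=V\times\{id\}$.
   Context: For $\varphi\in S_h$ and $x\in\{0,1\}^h$, $x^\varphi=(x_{\varphi^{-1}(1)},\dots,x_{\varphi^{-1}(h)})$; the invariance group of $f:\{0,1\}^h\to\{0,1\}$ is $S(f)=\{\varphi\in S_h: f(x^\varphi)=f(x)\ \forall x\}$. Permutations compose as $(\sigma\tau)(x)=\sigma(\tau(x))$. Let $\mathcal{P}=(S_n)^h$ with $G=S_h\times S_n$ acting by $(p^{(\varphi,\psi)})_i=\psi\,p_{\varphi^{-1}(i)}$, and $p^U=\{p^g:g\in U\}$. $U\leq G$ is regular if for every $p$, $\{g\in U:p^g=p\}\subseteq S_h\times\{id\}$ (every subgroup of $S_h\times\{id\}$ is regular). For regular $U$, $\mathcal{A}(U)$ is the set of regular $W\leq G$ with $W\geq U$ and $p^W\subseteq p^U$ for all $p\in\mathcal{P}$, and $O(U)=\langle\mathcal{A}(U)\rangle$. *)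

theory Defs
  imports "HOL-Algebra.Sym_Groups" "HOL-Algebra.Generated_Groups"
begin

definition perm_vec :: "nat \<Rightarrow> (nat \<Rightarrow> nat) \<Rightarrow> (nat \<Rightarrow> bool) \<Rightarrow> (nat \<Rightarrow> bool)" where
  "perm_vec h \<phi> x = (\<lambda>i\<in>{1..h}. x (Hilbert_Choice.inv \<phi> i))"

definition invariance_group :: "nat \<Rightarrow> ((nat \<Rightarrow> bool) \<Rightarrow> bool) \<Rightarrow> (nat \<Rightarrow> nat) set" where
  "invariance_group h f = {\<phi> \<in> carrier (sym_group h).
     \<forall>x \<in> {1..h} \<rightarrow>\<^sub>E (UNIV :: bool set). f (perm_vec h \<phi> x) = f x}"

definition bigG :: "nat \<Rightarrow> nat \<Rightarrow> ((nat \<Rightarrow> nat) \<times> (nat \<Rightarrow> nat)) monoid" where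
  "bigG h n = sym_group h \<times>\<times> sym_group n"

definition tuples :: "nat \<Rightarrow> nat \<Rightarrow> (nat \<Rightarrow> (nat \<Rightarrow> nat)) set" where
  "tuples h n = {1..h} \<rightarrow>\<^sub>E carrier (sym_group n)"

definition act :: "nat \<Rightarrow> (nat \<Rightarrow> (nat \<Rightarrow> nat)) \<Rightarrow> (nat \<Rightarrow> nat) \<times> (nat \<Rightarrow> nat) \<Rightarrow> (nat \<Rightarrow> (nat \<Rightarrow> nat))" where
  "act h p g = (\<lambda>i\<in>{1..h}. snd g \<circ> p (Hilbert_Choice.inv (fst g) i))"

definition orbit_under :: "nat \<Rightarrow> ((nat \<Rightarrow> nat) \<times> (nat \<Rightarrow> nat)) set \<Rightarrow> (nat \<Rightarrow> (nat \<Rightarrow> nat)) \<Rightarrow> (nat \<Rightarrow> (nat \<Rightarrow> nat)) set" where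
  "orbit_under h U p = (act h p) ` U"

definition regular :: "nat \<Rightarrow> nat \<Rightarrow> ((nat \<Rightarrow> nat) \<times> (nat \<Rightarrow> nat)) set \<Rightarrow> bool" where
  "regular h n U \<longleftrightarrow> (\<forall>p \<in> tuples h n. \<forall>g \<in> U. act h p g = p \<longrightarrow> snd g = id)"

definition calA :: "nat \<Rightarrow> nat \<Rightarrow> ((nat \<Rightarrow> nat) \<times> (nat \<Rightarrow> nat)) set \<Rightarrow> ((nat \<Rightarrow> nat) \<times> (nat \<Rightarrow> nat)) set set" where
  "calA h n U = {W. subgroup W (bigG h n) \<and> regular h n W \<and> U \<subseteq> W \<and>
     (\<forall>p \<in> tuples h n. orbit_under h W p \<subseteq> orbit_under h U p)}"

definition calO :: "nat \<Rightarrow> nat \<Rightarrow> ((nat \<Rightarrow> nat) \<times> (nat \<Rightarrow> nat)) set \<Rightarrow> ((nat \<Rightarrow> nat) \<times> (nat \<Rightarrow> nat)) set" where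
  "calO h n U = generate (bigG h n) (\<Union> (calA h n U))"

end

theory Submission
  imports Defs
begin

lemma pv_ext: "perm_vec h \<phi> x \<in> {1..h} \<rightarrow>\<^sub>E (UNIV :: bool set)"
  unfolding perm_vec_def by auto

lemma pv_id: assumes "x \<in> {1..h} \<rightarrow>\<^sub>E (UNIV :: bool set)" shows "perm_vec h id x = x"
proof
  fix i show "perm_vec h id x i = x i"
    using assms unfolding perm_vec_def by (cases "i \<in> {1..h}") (auto simp: inv_id PiE_def extensional_def)
qed

lemma pv_comp:
  assumes "\<phi> permutes {1..h}" "\<sigma> permutes {1..h}"
  shows "perm_vec h (\<phi> \<circ> \<sigma>) x = perm_vec h \<phi> (perm_vec h \<sigma> x)"
proof -
  have b: "bij \<phi>" "bij \<sigma>" using assms permutes_bij by auto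
  have "inv' (\<phi> \<circ> \<sigma>) = inv' \<sigma> \<circ> inv' \<phi>" using b o_inv_distrib bij_is_inj bij_is_surj
    by (metis bij_betw_def)
  moreover have "i \<in> {1..h} \<Longrightarrow> inv' \<phi> i \<in> {1..h}" for i
    using permutes_in_image[OF permutes_inv[OF assms(1)]] by simp
  ultimately show ?thesis unfolding perm_vec_def by (auto intro!: ext)
qed

lemma pv_inv:
  assumes "\<phi> permutes {1..h}" "x \<in> {1..h} \<rightarrow>\<^sub>E (UNIV :: bool set)"
  shows "perm_vec h \<phi> (perm_vec h (inv' \<phi>) x) = x"
proof -
  have "perm_vec h \<phi> (perm_vec h (inv' \<phi>) x) = perm_vec h (\<phi> \<circ> inv' \<phi>) x"
    using pv_comp[OF assms(1) permutes_inv[OF assms(1)]] by simp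
  also have "\<phi> \<circ> inv' \<phi> = id" using permutes_inv_o(1)[OF assms(1)] .
  finally show ?thesis using pv_id[OF assms(2)] by metis
qed

lemma ig_inv_closed:
  assumes a: "a \<in> invariance_group h f"
  shows "inv' a \<in> invariance_group h f"
proof -
  have ap: "a permutes {1..h}" using a unfolding invariance_group_def sym_group_carrier by auto
  have c: "inv' a \<in> carrier (sym_group h)" using ap permutes_inv sym_group_carrier by blast
  have "f (perm_vec h (inv' a) x) = f x" if x: "x \<in> {1..h} \<rightarrow>\<^sub>E UNIV" for x
  proof -
    have "f (perm_vec h a (perm_vec h (inv' a) x)) = f (perm_vec h (inv' a) x)"
      using a pv_ext unfolding invariance_group_def by blast
    then show ?thesis using pv_inv[OF ap x] by simp
  qed
  then show ?thesis using c unfolding invariance_group_def by blast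
qed

lemma ig_mult_closed:
  assumes a: "a \<in> invariance_group h f" and b: "b \<in> invariance_group h f"
  shows "a \<circ> b \<in> invariance_group h f"
proof -
  have ap: "a permutes {1..h}" and bp: "b permutes {1..h}"
    using a b unfolding invariance_group_def sym_group_carrier by auto
  have c: "a \<circ> b \<in> carrier (sym_group h)" using ap bp permutes_compose sym_group_carrier by blast
  have "f (perm_vec h (a \<circ> b) x) = f x" if x: "x \<in> {1..h} \<rightarrow>\<^sub>E UNIV" for x
  proof -
    have "f (perm_vec h a (perm_vec h b x)) = f (perm_vec h b x)"
      using a pv_ext unfolding invariance_group_def by blast
    also have "\<dots> = f x" using b x unfolding invariance_group_def by blast
    finally show ?thesis using pv_comp[OF ap bp] by simp
  qed
  then show ?thesis using c unfolding invariance_group_def by blast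
qed

lemma inv_subgroup: "subgroup (invariance_group h f) (sym_group h)"
proof -
  interpret group "sym_group h" by (rule sym_group_is_group)
  have sub: "invariance_group h f \<subseteq> carrier (sym_group h)" unfolding invariance_group_def by auto
  show ?thesis
  proof (rule subgroupI)
    show "invariance_group h f \<subseteq> carrier (sym_group h)" by (rule sub)
    have "id \<in> invariance_group h f" unfolding invariance_group_def
      using pv_id by (auto simp: sym_group_carrier permutes_id)
    then show "invariance_group h f \<noteq> {}" by blast
  next
    fix a assume a: "a \<in> invariance_group h f"
    then have "inv\<^bsub>sym_group h\<^esub> a = inv' a" using sub by auto
    then show "inv\<^bsub>sym_group h\<^esub> a \<in> invariance_group h f" using ig_inv_closed[OF a] by simp
  next
    fix a b assume a: "a \<in> invariance_group h f" and b: "b \<in> invariance_group h f"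
    show "a \<otimes>\<^bsub>sym_group h\<^esub> b \<in> invariance_group h f"
      using ig_mult_closed[OF a b] by (simp add: sym_group_mult)
  qed
qed

theorem mainTheorem17:
  fixes h n :: nat and V :: "(nat \<Rightarrow> nat) set" and f :: "(nat \<Rightarrow> bool) \<Rightarrow> bool"
  assumes "h \<ge> 2" and "n \<ge> 2"
    and "V = invariance_group h f"
  shows "calO h n (V \<times> {id}) = V \<times> {id}"
proof -
  have gG: "group (bigG h n)" unfolding bigG_def
    by (intro DirProd_group sym_group_is_group)
  have sub: "subgroup (V \<times> {id}) (bigG h n)" unfolding bigG_def
    using DirProd_subgroups[OF sym_group_is_group inv_subgroup sym_group_is_group
        group.triv_subgroup[OF sym_group_is_group]] assms(3) by (simp add: sym_group_one)
  have inA: "V \<times> {id} \<in> calA h n (V \<times> {id})"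
    unfolding calA_def regular_def using sub by auto
  have le: "W \<subseteq> V \<times> {id}" if W: "W \<in> calA h n (V \<times> {id})" for W
  proof
    fix g assume gW: "g \<in> W"
    obtain \<phi> \<psi> where g: "g = (\<phi>, \<psi>)" by force
    have "subgroup W (bigG h n)" using W unfolding calA_def by blast
    then have Wc: "W \<subseteq> carrier (bigG h n)" by (rule subgroup.subset)
    have "(\<phi>, \<psi>) \<in> carrier (sym_group h) \<times> carrier (sym_group n)"
      using Wc gW g unfolding bigG_def DirProd_def by auto
    then have "\<phi> \<in> carrier (sym_group h)" by blast
    then have \<phi>p: "\<phi> permutes {1..h}" using sym_group_carrier by blast
    have orb: "\<exists>\<sigma>\<in>V. act h p (\<phi>, \<psi>) = act h p (\<sigma>, id)" if "p \<in> tuples h n" for p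
    proof -
      have Wo: "orbit_under h W p \<subseteq> orbit_under h (V \<times> {id}) p"
        using W that unfolding calA_def by blast
      have "act h p (\<phi>, \<psi>) \<in> orbit_under h W p"
        unfolding orbit_under_def using gW g by blast
      with Wo have "act h p (\<phi>, \<psi>) \<in> act h p ` (V \<times> {id})"
        unfolding orbit_under_def by blast
      then show ?thesis by blast
    qed
    define p0 :: "nat \<Rightarrow> nat \<Rightarrow> nat" where "p0 = (\<lambda>i\<in>{1..h}. id)"
    have "p0 \<in> tuples h n" unfolding p0_def tuples_def
      by (auto simp: sym_group_carrier permutes_id)
    then obtain \<sigma> where \<sigma>V: "\<sigma> \<in> V" and eq0: "act h p0 (\<phi>, \<psi>) = act h p0 (\<sigma>, id)" using orb by blast
    have invin: "inv' \<tau> i \<in> {1..h}" if "\<tau> permutes {1..h}" "i \<in> {1..h}" for \<tau> i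
      using permutes_in_image[OF permutes_inv[OF that(1)]] that(2) by simp
    have Vp: "\<tau> permutes {1..h}" if "\<tau> \<in> V" for \<tau>
      using that assms(3) unfolding invariance_group_def sym_group_carrier by auto
    have "act h p0 (\<phi>, \<psi>) 1 = act h p0 (\<sigma>, id) 1" using eq0 by simp
    moreover have "inv' \<phi> 1 \<in> {1..h}" "inv' \<sigma> 1 \<in> {1..h}"
      using invin \<phi>p Vp[OF \<sigma>V] assms(1) by auto
    ultimately have \<psi>id: "\<psi> = id" using assms(1) unfolding act_def p0_def by simp
    have "\<phi> \<in> V" unfolding assms(3) invariance_group_def
    proof (intro CollectI conjI ballI)
      show "\<phi> \<in> carrier (sym_group h)" using \<phi>p sym_group_carrier by blast
      fix x :: "nat \<Rightarrow> bool" assume x: "x \<in> {1..h} \<rightarrow>\<^sub>E UNIV"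
      define sw :: "nat \<Rightarrow> nat" where "sw = Transposition.transpose 1 2"
      have swp: "sw permutes {1..n}" unfolding sw_def using assms(2)
        by (intro permutes_swap_id) auto
      have "sw 1 = 2" unfolding sw_def by simp
      have swne: "sw \<noteq> id" proof (rule notI)
        assume "sw = id" then have "sw 1 = 1" by simp
        with \<open>sw 1 = 2\<close> show False by simp
      qed
      define p where "p = (\<lambda>i\<in>{1..h}. if x i then sw else id)"
      have "p \<in> tuples h n" unfolding p_def tuples_def
        using swp by (auto simp: sym_group_carrier permutes_id)
      then obtain \<sigma> where \<sigma>V: "\<sigma> \<in> V" and eq: "act h p (\<phi>, \<psi>) = act h p (\<sigma>, id)" using orb by blast
      have "perm_vec h \<phi> x = perm_vec h \<sigma> x"
      proof
        fix i show "perm_vec h \<phi> x i = perm_vec h \<sigma> x i"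
        proof (cases "i \<in> {1..h}")
          case True
          have a1: "inv' \<phi> i \<in> {1..h}" "inv' \<sigma> i \<in> {1..h}"
            using invin \<phi>p Vp[OF \<sigma>V] True by auto
          have "act h p (\<phi>, \<psi>) i = act h p (\<sigma>, id) i" using eq by simp
          then have "p (inv' \<phi> i) = p (inv' \<sigma> i)" using True \<psi>id unfolding act_def by simp
          then have "x (inv' \<phi> i) = x (inv' \<sigma> i)" using a1 swne unfolding p_def
            by (auto split: if_splits)
          then show ?thesis using True unfolding perm_vec_def by simp
        next
          case False then show ?thesis unfolding perm_vec_def restrict_def by (simp only: if_False)
        qed
      qed
      moreover have "f (perm_vec h \<sigma> x) = f x"
        using \<sigma>V x assms(3) unfolding invariance_group_def by blast
      ultimately show "f (perm_vec h \<phi> x) = f x" by simp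
    qed
    then show "g \<in> V \<times> {id}" using g \<psi>id by simp
  qed
  have U: "\<Union> (calA h n (V \<times> {id})) = V \<times> {id}" using inA le by blast
  show ?thesis unfolding calO_def U
    using group.generate_subgroup_incl[OF gG _ sub] generate.incl[of _ "V \<times> {id}" "bigG h n"]
    by blast
qed

end
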